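(* Let $n\ge 2$, let $M=(\mathbf{R}^3)^n\setminus\{(p_0,\ldots,p_0)\mid p_0\in\mathbf{R}^3\}$, and let $X$ be a vector field on $M$ (with $T_pM$ identified with $(\mathbf{R}^3)^n$) whose components $X_1,\ldots,X_n\colon M\to\mathbf{R}^3$ are homogeneous quadratic polynomials in the coordinates of $p=(p_1,\ldots,p_n)$, and which is translation invariant, i.e. $X_{p+(p_0,\ldots,p_0)}=X_p$ for all $p_0\in\mathbf{R}^3$. Define $\Psi(v)=v/\sqrt{\|v\|}$ for $v\neq 0$ and $\Psi(0)=0$. Then $Y=\Psi(X)$ descends to a vector field on the quotient $N=M/\sim$: for all $p,p'\in M$ with $p\sim p'$ one has $D(\pi)_p(\Psi(X_p))=D(\pi)_{p'}(\Psi(X_{p'}))$, so that $Y_q=D(\pi)(\Psi(X_p))$ with $\pi(p)=q$ is a well-defined vector field on $N$.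
   Context: The equivalence relation $\sim$ on $M$ is generated by $p\sim\lambda p$ for $\lambda>0$ and $p\sim p+(p_0,\ldots,p_0)$ for $p_0\in\mathbf{R}^3$. The maps are $\tau\colon(\mathbf{R}^3)^n\to(\mathbf{R}^3)^n$, $\tau(p_1,\ldots,p_n)=(p_1-p_n,\ldots,p_{n-1}-p_n,0)$, $\sigma(p)=p/\|p\|$ on $(\mathbf{R}^3)^n\setminus\{0\}$, and $\pi=\sigma\circ\tau\colon M\to S^{3(n-1)-1}$, where $S^{3(n-1)-1}=\{p\in(\mathbf{R}^3)^n: p_n=0,\ \|p\|=1\}$; $N$ is identified with this sphere via $\pi$, with the round metric. $D(\pi)$ denotes the differential of $\pi$. *)

theory Defs
  imports "HOL-Analysis.Analysis"
begin

text \<open>Configurations of n points in R^3 are elements of real^3^'n, where the finite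
  linearly ordered index type 'n plays the role of {1..n}; its greatest element is
  the last index n.\<close>

type_synonym ('n) config = "real^3^'n"

definition last_idx :: "'n::{finite,linorder}" where
  "last_idx = Max (UNIV :: 'n set)"

definition diag :: "real^3 \<Rightarrow> real^3^'n::{finite,linorder}" where
  "diag p0 = (\<chi> i. p0)"

definition Mset :: "(real^3^'n::{finite,linorder}) set" where
  "Mset = UNIV - range diag"

definition sim_gen :: "real^3^('n::{finite,linorder}) \<Rightarrow> real^3^('n::{finite,linorder}) \<Rightarrow> bool" where
  "sim_gen p q \<longleftrightarrow> p \<in> Mset \<and> q \<in> Mset \<and>
     ((\<exists>c>0. q = c *\<^sub>R p) \<or> (\<exists>p0. q = p + diag p0))"

definition sim :: "real^3^('n::{finite,linorder}) \<Rightarrow> real^3^('n::{finite,linorder}) \<Rightarrow> bool" where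
  "sim = equivclp sim_gen"

definition tau :: "real^3^'n::{finite,linorder} \<Rightarrow> real^3^'n::{finite,linorder}" where
  "tau p = (\<chi> i. p $ i - p $ last_idx)"

definition sigma :: "real^3^'n::{finite,linorder} \<Rightarrow> real^3^'n::{finite,linorder}" where
  "sigma p = p /\<^sub>R norm p"

definition proj :: "real^3^'n::{finite,linorder} \<Rightarrow> real^3^'n::{finite,linorder}" where
  "proj = sigma \<circ> tau"

definition Psi :: "real^3^'n::{finite,linorder} \<Rightarrow> real^3^'n::{finite,linorder}" where
  "Psi v = (if v = 0 then 0 else v /\<^sub>R sqrt (norm v))"

definition homog_quadratic_field :: "(real^3^('n::{finite,linorder}) \<Rightarrow> real^3^('n::{finite,linorder})) \<Rightarrow> bool" where
  "homog_quadratic_field X \<longleftrightarrow>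
     (\<exists>C :: 'n \<Rightarrow> 3 \<Rightarrow> 'n \<Rightarrow> 3 \<Rightarrow> 'n \<Rightarrow> 3 \<Rightarrow> real.
        \<forall>p\<in>Mset. X p = (\<chi> i a. \<Sum>j\<in>UNIV. \<Sum>b\<in>UNIV. \<Sum>k\<in>UNIV. \<Sum>c\<in>UNIV.
                                   C i a j b k c * (p $ j $ b) * (p $ k $ c)))"

end

theory Submission
  imports Defs
begin

lemma tau_add_diag: "tau (x + diag p0) = tau x"
  unfolding tau_def diag_def by (simp add: vec_eq_iff)

lemma tau_scale: "tau (c *\<^sub>R x) = c *\<^sub>R tau x"
  unfolding tau_def by (simp add: vec_eq_iff algebra_simps)

lemma tau_linear: "bounded_linear tau"
proof -
  have "linear tau"
    by (rule linearI) (simp_all add: tau_def vec_eq_iff algebra_simps)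
  then show ?thesis by (simp add: linear_conv_bounded_linear)
qed

lemma tau_nz: assumes "p \<in> Mset" shows "tau p \<noteq> 0"
proof
  assume "tau p = 0"
  then have "p = diag (p $ last_idx)"
    unfolding tau_def diag_def by (simp add: vec_eq_iff)
  with assms show False unfolding Mset_def by auto
qed

lemma proj_scale: assumes "c > 0" shows "proj (c *\<^sub>R x) = proj x"
  using assms unfolding proj_def sigma_def by (simp add: tau_scale)

lemma proj_trans: "proj (x + diag p0) = proj x"
  unfolding proj_def by (simp add: tau_add_diag)

lemma proj_diff: fixes p :: "real^3^'a::{finite,linorder}" assumes "tau p \<noteq> 0" shows "proj differentiable (at p)"
proof -
  have t: "tau differentiable (at p)"
    using tau_linear bounded_linear_imp_differentiable by blast
  have n: "(\<lambda>x. inverse (norm x)) differentiable (at (tau p))"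
    using assms by (auto intro!: derivative_intros)
  have eq: "sigma = (\<lambda>x::real^3^'a::{finite,linorder}. inverse (norm x) *\<^sub>R x)"
    by (simp add: sigma_def fun_eq_iff)
  have s: "sigma differentiable (at (tau p))"
    unfolding eq using n by (auto intro!: derivative_intros)
  show ?thesis unfolding proj_def using t s by (rule differentiable_chain_at)
qed

lemma fd_linear_map: assumes "bounded_linear g" shows "frechet_derivative g (at p) = g"
  using assms frechet_derivative_at[OF bounded_linear_imp_has_derivative[OF assms]] by simp

lemma fd_scale:
  assumes "tau p \<noteq> 0" "c > 0"
  shows "frechet_derivative proj (at p) w = frechet_derivative proj (at (c *\<^sub>R p)) (c *\<^sub>R w)"
proof -
  let ?g = "\<lambda>x. c *\<^sub>R x"
  have bl: "bounded_linear ?g" by (rule bounded_linear_scaleR_right)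
  have gd: "?g differentiable (at p)" using bl bounded_linear_imp_differentiable by blast
  have "tau (c *\<^sub>R p) \<noteq> 0" using assms by (simp add: tau_scale)
  then have pd: "proj differentiable (at (?g p))" by (simp add: proj_diff)
  have pg: "proj \<circ> ?g = proj" using assms by (auto simp: proj_scale)
  have e: "frechet_derivative proj (at p) = frechet_derivative proj (at (c *\<^sub>R p)) \<circ> ?g"
    using frechet_derivative_compose[OF gd pd] unfolding fd_linear_map[OF bl, of p] pg .
  show ?thesis by (simp add: e)
qed

lemma fd_trans:
  assumes "tau p \<noteq> 0"
  shows "frechet_derivative proj (at p) w = frechet_derivative proj (at (p + diag p0)) w"
proof -
  let ?g = "\<lambda>x. x + diag p0"
  have gd: "?g differentiable (at p)" by (auto intro!: derivative_intros)
  have hd: "(?g has_derivative id) (at p)"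
    by (auto intro!: derivative_eq_intros simp: id_def)
  have fg: "frechet_derivative ?g (at p) = id" using frechet_derivative_at[OF hd] by simp
  have "tau (p + diag p0) \<noteq> 0" using assms by (simp add: tau_add_diag)
  then have pd: "proj differentiable (at (?g p))" by (simp add: proj_diff)
  have pg: "proj \<circ> ?g = proj" by (auto simp: proj_trans)
  have e: "frechet_derivative proj (at p) = frechet_derivative proj (at (p + diag p0)) \<circ> id"
    using frechet_derivative_compose[OF gd pd] unfolding fg pg .
  show ?thesis by (simp add: e)
qed

lemma chi_scale: "(\<chi> i a. (c::real) * f i a) = c *\<^sub>R (\<chi> i a. f i a)"
  by (simp add: vec_eq_iff)

lemma X_scale:
  assumes "homog_quadratic_field X" "p \<in> Mset" "c *\<^sub>R p \<in> Mset"
  shows "X (c *\<^sub>R p) = c^2 *\<^sub>R X p"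
proof -
  obtain C where C: "\<forall>p\<in>Mset. X p = (\<chi> i a. \<Sum>j\<in>UNIV. \<Sum>b\<in>UNIV. \<Sum>k\<in>UNIV. \<Sum>c\<in>UNIV.
                                   C i a j b k c * (p $ j $ b) * (p $ k $ c))"
    using assms(1) unfolding homog_quadratic_field_def by blast
  have aux: "\<And>K x y. K * (c * x) * (c * y) = c^2 * (K * x * y)"
    by (simp add: power2_eq_square algebra_simps)
  have "X (c *\<^sub>R p) = (\<chi> i a. \<Sum>j\<in>UNIV. \<Sum>b\<in>UNIV. \<Sum>k\<in>UNIV. \<Sum>d\<in>UNIV.
                                   C i a j b k d * ((c *\<^sub>R p) $ j $ b) * ((c *\<^sub>R p) $ k $ d))"
    using C assms(3) by blast
  also have "\<dots> = (\<chi> i a. c^2 * (\<Sum>j\<in>UNIV. \<Sum>b\<in>UNIV. \<Sum>k\<in>UNIV. \<Sum>d\<in>UNIV.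
                                   C i a j b k d * (p $ j $ b) * (p $ k $ d)))"
    by (simp only: vector_scaleR_component real_scaleR_def aux sum_distrib_left)
  also have "\<dots> = c^2 *\<^sub>R X p"
    unfolding C[rule_format, OF assms(2)] by (rule chi_scale)
  finally show ?thesis .

qed

lemma Psi_scale: assumes "c > 0" shows "Psi ((c^2) *\<^sub>R v) = c *\<^sub>R Psi v"
proof (cases "v = 0")
  case True then show ?thesis by (simp add: Psi_def)
next
  case False
  have "sqrt (norm ((c^2) *\<^sub>R v)) = c * sqrt (norm v)"
    using assms by (simp add: real_sqrt_mult)
  then show ?thesis using False assms by (simp add: Psi_def power2_eq_square)
qed

lemma sim_step:
  fixes X :: "real^3^('n::{finite,linorder}) \<Rightarrow> real^3^('n::{finite,linorder})"
  assumes hq: "homog_quadratic_field X"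
    and ti: "\<forall>p\<in>Mset. \<forall>p0. X (p + diag p0) = X p"
    and g: "sim_gen p q"
  shows "frechet_derivative proj (at p) (Psi (X p)) =
         frechet_derivative proj (at q) (Psi (X q))"
proof -
  have pM: "p \<in> Mset" and qM: "q \<in> Mset" using g unfolding sim_gen_def by auto
  have tp: "tau p \<noteq> 0" using pM by (rule tau_nz)
  from g consider (s) c where "c > 0" "q = c *\<^sub>R p" | (t) p0 where "q = p + diag p0"
    unfolding sim_gen_def by blast
  then show ?thesis
  proof cases
    case s
    have "X q = c^2 *\<^sub>R X p" using X_scale[OF hq pM] qM s by simp
    then have "Psi (X q) = c *\<^sub>R Psi (X p)" using Psi_scale[OF s(1)] by simp
    then have e: "Psi (X q) = c *\<^sub>R Psi (X p)" .
    have "frechet_derivative proj (at p) (Psi (X p)) =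
          frechet_derivative proj (at (c *\<^sub>R p)) (c *\<^sub>R Psi (X p))"
      by (rule fd_scale[OF tp s(1)])
    then show ?thesis using e s(2) by simp
  next
    case t
    have "X q = X p" using ti pM t by simp
    then have e: "Psi (X q) = Psi (X p)" by simp
    have "frechet_derivative proj (at p) (Psi (X p)) =
          frechet_derivative proj (at (p + diag p0)) (Psi (X p))"
      by (rule fd_trans[OF tp])
    then show ?thesis using e t by simp
  qed
qed

theorem lemma2:
  fixes X :: "real^3^('n::{finite,linorder}) \<Rightarrow> real^3^('n::{finite,linorder})"
  assumes "CARD('n) \<ge> 2"
    and "homog_quadratic_field X"
    and "\<forall>p\<in>Mset. \<forall>p0. X (p + diag p0) = X p"
    and "p \<in> Mset" and "p' \<in> Mset" and "sim p p'"
  shows "frechet_derivative proj (at p) (Psi (X p)) =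
         frechet_derivative proj (at p') (Psi (X p'))"
  using assms(6) unfolding sim_def
proof (induct rule: equivclp_induct)
  case base
  then show ?case by simp
next
  case (step y z)
  have "frechet_derivative proj (at y) (Psi (X y)) = frechet_derivative proj (at z) (Psi (X z))"
  proof (cases "sim_gen y z")
    case True
    show ?thesis by (rule sim_step[OF assms(2,3) True])
  next
    case False
    then have "sim_gen z y" using step.hyps(2) by blast
    from sim_step[OF assms(2,3) this] show ?thesis by (rule sym)
  qed
  with step.hyps(3) show ?case by (rule trans)
qed

end
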